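(* Let $\{f_i\}_{i=1}^k$ be a frame for $\mathcal{H}_n$. If $(p,q)$-surgery on $\{f_i\}_{i=1}^k$ is possible, then $(r,r-p+q)$-surgery on $\{f_i\}_{i=1}^k$ is possible for every $r=p+1,p+2,\dots,k$.
   Context: $\mathcal{H}_n$ is an $n$-dimensional real or complex Hilbert space. A sequence $\{h_i\}$ in $\mathcal{H}_n$ is a tight frame if there is $\lambda>0$ with $\sum_i|\langle f,h_i\rangle|^2=\lambda\|f\|^2$ for all $f\in\mathcal{H}_n$. For a frame $\{f_i\}_{i=1}^k$, $(p,q)$-surgery is possible if there exist $I\subseteq\{1,\dots,k\}$ with $|I|=p$ and vectors $g_1,\dots,g_q\in\mathcal{H}_n$ such that $\{f_i\}_{i\notin I}\cup\{g_j\}_{j=1}^q$ is a tight frame for $\mathcal{H}_n$. *)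

theory Defs
  imports "HOL-Analysis.Analysis"
begin

text \<open>The n-dimensional Hilbert space H_n is modelled as K^'n with K = real or complex,
  where 'n is a finite index type with CARD('n) = n.  Inner products:\<close>

definition rinner :: "real ^ 'n \<Rightarrow> real ^ 'n \<Rightarrow> real" where
  "rinner x y = (\<Sum>i\<in>UNIV. x $ i * y $ i)"

definition cinner :: "complex ^ 'n \<Rightarrow> complex ^ 'n \<Rightarrow> complex" where
  "cinner x y = (\<Sum>i\<in>UNIV. x $ i * cnj (y $ i))"

definition is_frame :: "('v \<Rightarrow> 'v \<Rightarrow> 'c::real_normed_field) \<Rightarrow> (nat \<Rightarrow> 'v::real_normed_vector) \<Rightarrow> nat \<Rightarrow> bool" where
  "is_frame ip f k \<longleftrightarrow> (\<exists>A B. 0 < A \<and> A \<le> B \<and>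
     (\<forall>x. A * (norm x)\<^sup>2 \<le> (\<Sum>i\<in>{1..k}. (norm (ip x (f i)))\<^sup>2) \<and>
          (\<Sum>i\<in>{1..k}. (norm (ip x (f i)))\<^sup>2) \<le> B * (norm x)\<^sup>2))"

definition is_tight_frame :: "('v \<Rightarrow> 'v \<Rightarrow> 'c::real_normed_field) \<Rightarrow> 'j set \<Rightarrow> ('j \<Rightarrow> 'v::real_normed_vector) \<Rightarrow> bool" where
  "is_tight_frame ip J h \<longleftrightarrow> (\<exists>c>0. \<forall>x. (\<Sum>j\<in>J. (norm (ip x (h j)))\<^sup>2) = c * (norm x)\<^sup>2)"

text \<open>(p,q)-surgery: remove the vectors f_i, i in I (|I| = p), add g_1..g_q.
  The resulting family is indexed by the disjoint union ({1..k} - I) + {1..q}.\<close>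
definition surgery_possible :: "('v \<Rightarrow> 'v \<Rightarrow> 'c::real_normed_field) \<Rightarrow> (nat \<Rightarrow> 'v::real_normed_vector) \<Rightarrow> nat \<Rightarrow> nat \<Rightarrow> nat \<Rightarrow> bool" where
  "surgery_possible ip f k p q \<longleftrightarrow> (\<exists>I g. I \<subseteq> {1..k} \<and> card I = p \<and>
     is_tight_frame ip (Inl ` ({1..k} - I) \<union> Inr ` {1..q}) (case_sum f g))"

end

theory Submission
  imports Defs
begin

lemma sum_plus_sum:
  fixes F :: "'a + 'b \<Rightarrow> real"
  assumes "finite A" "finite B"
  shows "(\<Sum>j\<in>Inl ` A \<union> Inr ` B. F j) = (\<Sum>a\<in>A. F (Inl a)) + (\<Sum>b\<in>B. F (Inr b))"
proof -
  have "(\<Sum>j\<in>Inl ` A \<union> Inr ` B. F j) = (\<Sum>j\<in>Inl ` A. F j) + (\<Sum>j\<in>Inr ` B. F j)"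
    by (rule sum.union_disjoint) (use assms in auto)
  also have "\<dots> = (\<Sum>a\<in>A. F (Inl a)) + (\<Sum>b\<in>B. F (Inr b))"
    by (simp add: sum.reindex)
  finally show ?thesis .
qed

lemma surgery_gen:
  fixes ip :: "'v::real_normed_vector \<Rightarrow> 'v \<Rightarrow> 'c::real_normed_field"
  assumes "surgery_possible ip f k p q" "p + 1 \<le> r" "r \<le> k"
  shows "surgery_possible ip f k r (r - p + q)"
proof -
  obtain I g where I: "I \<subseteq> {1..k}" "card I = p"
    and T: "is_tight_frame ip (Inl ` ({1..k} - I) \<union> Inr ` {1..q}) (case_sum f g)"
    using assms(1) unfolding surgery_possible_def by blast
  have fI: "finite I" using I(1) finite_subset by blast
  have "card ({1..k} - I) = k - p" using I fI by (simp add: card_Diff_subset)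
  hence "r - p \<le> card ({1..k} - I)" using assms by simp
  then obtain D where D: "D \<subseteq> {1..k} - I" "card D = r - p"
    using obtain_subset_with_card_n by metis
  have fD: "finite D" using D(1) finite_subset by blast
  have "card {q+1..q+(r-p)} = card D" using D by simp
  then obtain e where e: "bij_betw e {q+1..q+(r-p)} D"
    using finite_same_card_bij[of "{q+1..q+(r-p)}" D] fD by auto
  define I' where "I' = I \<union> D"
  define g' where "g' j = (if j \<le> q then g j else f (e j))" for j
  have I'1: "I' \<subseteq> {1..k}" using I D by (auto simp: I'_def)
  have I'2: "card I' = r" unfolding I'_def using D I fI fD assms
    by (subst card_Un_disjoint) auto
  obtain c where c: "c > 0" and
    cT: "\<And>x. (\<Sum>j\<in>Inl ` ({1..k} - I) \<union> Inr ` {1..q}. (norm (ip x (case_sum f g j)))\<^sup>2) = c * (norm x)\<^sup>2"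
    using T unfolding is_tight_frame_def by blast
  have "(\<Sum>j\<in>Inl ` ({1..k} - I') \<union> Inr ` {1..r - p + q}. (norm (ip x (case_sum f g' j)))\<^sup>2) = c * (norm x)\<^sup>2" for x
  proof -
    let ?F = "\<lambda>i. (norm (ip x (f i)))\<^sup>2"
    have sp: "{1..r - p + q} = {1..q} \<union> {q+1..q+(r-p)}" by auto
    have A: "(\<Sum>j\<in>{1..r - p + q}. (norm (ip x (g' j)))\<^sup>2)
        = (\<Sum>j\<in>{1..q}. (norm (ip x (g j)))\<^sup>2) + (\<Sum>j\<in>{q+1..q+(r-p)}. ?F (e j))"
      unfolding sp by (subst sum.union_disjoint) (auto simp: g'_def)
    have B: "(\<Sum>j\<in>{q+1..q+(r-p)}. ?F (e j)) = (\<Sum>i\<in>D. ?F i)"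
      using sum.reindex_bij_betw[OF e, of ?F] by simp
    have C: "{1..k} - I = ({1..k} - I') \<union> D" using D by (auto simp: I'_def)
    have C2: "(\<Sum>i\<in>{1..k} - I. ?F i) = (\<Sum>i\<in>{1..k} - I'. ?F i) + (\<Sum>i\<in>D. ?F i)"
      unfolding C by (rule sum.union_disjoint) (use fD in \<open>auto simp: I'_def\<close>)
    have "(\<Sum>j\<in>Inl ` ({1..k} - I') \<union> Inr ` {1..r - p + q}. (norm (ip x (case_sum f g' j)))\<^sup>2)
      = (\<Sum>i\<in>{1..k} - I'. ?F i) + (\<Sum>j\<in>{1..r - p + q}. (norm (ip x (g' j)))\<^sup>2)"
      by (subst sum_plus_sum) auto
    also have "\<dots> = (\<Sum>j\<in>Inl ` ({1..k} - I) \<union> Inr ` {1..q}. (norm (ip x (case_sum f g j)))\<^sup>2)"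
      proof -
      have "(\<Sum>j\<in>Inl ` ({1..k} - I) \<union> Inr ` {1..q}. (norm (ip x (case_sum f g j)))\<^sup>2)
          = (\<Sum>i\<in>{1..k} - I. ?F i) + (\<Sum>j\<in>{1..q}. (norm (ip x (g j)))\<^sup>2)"
        by (rule trans[OF sum_plus_sum]) auto
      thus ?thesis unfolding A B C2 by simp
    qed
    also have "\<dots> = c * (norm x)\<^sup>2" by (rule cT)
    finally show ?thesis .
  qed
  hence "is_tight_frame ip (Inl ` ({1..k} - I') \<union> Inr ` {1..r - p + q}) (case_sum f g')"
    unfolding is_tight_frame_def using c by blast
  thus ?thesis unfolding surgery_possible_def using I'1 I'2 by blast
qed

theorem theorem3p2:
  shows "(\<forall>(f :: nat \<Rightarrow> real ^ 'n) k p q r.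
            is_frame rinner f k \<longrightarrow> surgery_possible rinner f k p q \<longrightarrow>
            p + 1 \<le> r \<longrightarrow> r \<le> k \<longrightarrow> surgery_possible rinner f k r (r - p + q))
       \<and> (\<forall>(f :: nat \<Rightarrow> complex ^ 'n) k p q r.
            is_frame cinner f k \<longrightarrow> surgery_possible cinner f k p q \<longrightarrow>
            p + 1 \<le> r \<longrightarrow> r \<le> k \<longrightarrow> surgery_possible cinner f k r (r - p + q))"
  by (intro conjI allI impI; rule surgery_gen; assumption)

end
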